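(* Let $h:[\ell,r]\to\mathbb{R}$ be a continuous concave function and $m\in\mathbb{R}$. If $\{x\in[\ell,r): h'_+(x)\leq m\}$ is non-empty, then $x_1=\inf\{x\in[\ell,r): h'_+(x)\leq m\}$ belongs to $\mathrm{xExt}(h)$ and $h'_+(x_1)\leq m$. Similarly, if $\{x\in(\ell,r]: h'_-(x)\geq m\}$ is non-empty, then $x_2=\sup\{x\in(\ell,r]: h'_-(x)\geq m\}$ belongs to $\mathrm{xExt}(h)$ and $h'_-(x_2)\geq m$.
   Context: $h'_\pm(x)=\lim_{y\to x^\pm}\frac{h(y)-h(x)}{y-x}$; $h'_+$ is defined on $[\ell,r)$ with values in $\mathbb{R}\cup\{\infty\}$ and $h'_-$ on $(\ell,r]$ with values in $\mathbb{R}\cup\{-\infty\}$. $\mathrm{xExt}(h)=\{\ell,r\}\cup\{x\in(\ell,r): h|_{[x-\delta,x+\delta]}\text{ is not linear for any }\delta>0\}$. *)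

theory Defs
  imports "HOL-Analysis.Analysis"
begin

text \<open>One-sided derivatives, valued in the extended reals (the limits of the
difference quotients; for concave h on [l,r] they exist in ereal).\<close>

definition rderiv :: "(real \<Rightarrow> real) \<Rightarrow> real \<Rightarrow> ereal" where
  "rderiv h x = Lim (at_right x) (\<lambda>y. ereal ((h y - h x) / (y - x)))"

definition lderiv :: "(real \<Rightarrow> real) \<Rightarrow> real \<Rightarrow> ereal" where
  "lderiv h x = Lim (at_left x) (\<lambda>y. ereal ((h y - h x) / (y - x)))"

definition xExt :: "(real \<Rightarrow> real) \<Rightarrow> real \<Rightarrow> real \<Rightarrow> real set" where
  "xExt h l r = {l, r} \<union> {x \<in> {l<..<r}. \<forall>\<delta>>0. \<not> (\<exists>a b. \<forall>y\<in>{x-\<delta>..x+\<delta>}. h y = a * y + b)}"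

end

theory Submission
  imports Defs
begin

definition sl :: "(real \<Rightarrow> real) \<Rightarrow> real \<Rightarrow> real \<Rightarrow> real" where
  "sl h a b = (h b - h a) / (b - a)"

lemma sl_sym: "sl h a b = sl h b a"
  unfolding sl_def by (metis minus_diff_eq minus_divide_divide)

lemma conc_slope:
  assumes "concave_on {l..r} h" "l \<le> x" "x < t" "t < y" "y \<le> r"
  shows "sl h x y \<le> sl h x t" "sl h t y \<le> sl h x y"
proof -
  have c: "convex_on {l..r} (\<lambda>x. - h x)" using assms(1) by (simp add: concave_on_def)
  have "x \<in> {l..r}" "y \<in> {l..r}" using assms by auto
  from convex_on_slope_le[OF c this assms(3,4)]
  have 1: "(- h x + h t) / (x - t) \<le> (- h x + h y) / (x - y)"
   and 2: "(- h x + h y) / (x - y) \<le> (- h t + h y) / (t - y)" by auto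
  have e1: "(- h x + h t) / (x - t) = - sl h x t" unfolding sl_def
    by (metis (no_types, opaque_lifting) add.commute diff_conv_add_uminus minus_diff_eq minus_divide_divide minus_divide_right)
  have e2: "(- h x + h y) / (x - y) = - sl h x y" unfolding sl_def
    by (metis (no_types, opaque_lifting) add.commute diff_conv_add_uminus minus_diff_eq minus_divide_divide minus_divide_right)
  have e3: "(- h t + h y) / (t - y) = - sl h t y" unfolding sl_def
    by (metis (no_types, opaque_lifting) add.commute diff_conv_add_uminus minus_diff_eq minus_divide_divide minus_divide_right)
  show "sl h x y \<le> sl h x t" "sl h t y \<le> sl h x y" using 1 2 e1 e2 e3 by auto
qed

lemma rderiv_char:
  assumes "concave_on {l..r} h" "l \<le> x" "x < r"
  shows "rderiv h x = (SUP y\<in>{x<..r}. ereal (sl h x y))"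
proof -
  let ?S = "(SUP y\<in>{x<..r}. ereal (sl h x y))"
  have "((\<lambda>y. ereal ((h y - h x) / (y - x))) \<longlongrightarrow> ?S) (at_right x)"
  proof (rule order_tendstoI)
    fix a assume "a < ?S"
    then obtain z where z: "z \<in> {x<..r}" "a < ereal (sl h x z)" by (auto simp: less_SUP_iff)
    have "eventually (\<lambda>y. y \<in> {x<..<z}) (at_right x)" using z by (intro eventually_at_right_real) auto
    then show "eventually (\<lambda>y. a < ereal ((h y - h x) / (y - x))) (at_right x)"
    proof (rule eventually_mono)
      fix y assume y: "y \<in> {x<..<z}"
      have "sl h x z \<le> sl h x y" using conc_slope(1)[OF assms(1) assms(2), of y z] y z by auto
      then show "a < ereal ((h y - h x) / (y - x))" using z(2) unfolding sl_def
        by (meson ereal_less_eq(3) less_le_trans)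
    qed
  next
    fix a assume "a > ?S"
    have "eventually (\<lambda>y. y \<in> {x<..<r}) (at_right x)" using assms by (intro eventually_at_right_real) auto
    then show "eventually (\<lambda>y. a > ereal ((h y - h x) / (y - x))) (at_right x)"
    proof (rule eventually_mono)
      fix y assume y: "y \<in> {x<..<r}"
      have "ereal (sl h x y) \<le> ?S" using y by (intro SUP_upper) auto
      then show "a > ereal ((h y - h x) / (y - x))" using \<open>a > ?S\<close> unfolding sl_def by auto
    qed
  qed
  then show ?thesis unfolding rderiv_def by (intro tendsto_Lim) auto
qed

lemma lderiv_char:
  assumes "concave_on {l..r} h" "l < x" "x \<le> r"
  shows "lderiv h x = (INF y\<in>{l..<x}. ereal (sl h y x))"
proof -
  let ?S = "(INF y\<in>{l..<x}. ereal (sl h y x))"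
  have "((\<lambda>y. ereal ((h y - h x) / (y - x))) \<longlongrightarrow> ?S) (at_left x)"
  proof (rule order_tendstoI)
    fix a assume "a > ?S"
    then obtain z where z: "z \<in> {l..<x}" "a > ereal (sl h z x)" by (auto simp: INF_less_iff)
    have "eventually (\<lambda>y. y \<in> {z<..<x}) (at_left x)" using z by (intro eventually_at_left_real) auto
    then show "eventually (\<lambda>y. a > ereal ((h y - h x) / (y - x))) (at_left x)"
    proof (rule eventually_mono)
      fix y assume y: "y \<in> {z<..<x}"
      have "sl h y x \<le> sl h z x" using conc_slope(2)[OF assms(1), of z y x] y z assms by auto
      then show "a > ereal ((h y - h x) / (y - x))" using z(2) sl_sym[of h y x] unfolding sl_def
        by (metis ereal_less_eq(3) order_le_less_trans)
    qed
  next
    fix a assume "a < ?S"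
    have "eventually (\<lambda>y. y \<in> {l<..<x}) (at_left x)" using assms by (intro eventually_at_left_real) auto
    then show "eventually (\<lambda>y. a < ereal ((h y - h x) / (y - x))) (at_left x)"
    proof (rule eventually_mono)
      fix y assume y: "y \<in> {l<..<x}"
      have "?S \<le> ereal (sl h y x)" using y by (intro INF_lower) auto
      then show "a < ereal ((h y - h x) / (y - x))" using \<open>a < ?S\<close> sl_sym[of h y x] unfolding sl_def by auto
    qed
  qed
  then show ?thesis unfolding lderiv_def by (intro tendsto_Lim) auto
qed

lemma part1:
  fixes h :: "real \<Rightarrow> real" and l r m :: real
  assumes cont: "continuous_on {l..r} h" and conc: "concave_on {l..r} h"
    and ne: "{x \<in> {l..<r}. rderiv h x \<le> ereal m} \<noteq> {}"
  shows "Inf {x \<in> {l..<r}. rderiv h x \<le> ereal m} \<in> xExt h l r \<and>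
         rderiv h (Inf {x \<in> {l..<r}. rderiv h x \<le> ereal m}) \<le> ereal m"
proof -
  define P where "P x \<longleftrightarrow> (\<forall>y\<in>{x<..r}. sl h x y \<le> m)" for x
  have rchar: "rderiv h x \<le> ereal m \<longleftrightarrow> P x" if "l \<le> x" "x < r" for x
    using rderiv_char[OF conc that] by (simp add: P_def SUP_le_iff)
  define S where "S = {x \<in> {l..<r}. rderiv h x \<le> ereal m}"
  have Sdef: "S = {x \<in> {l..<r}. P x}" unfolding S_def using rchar by auto
  define x1 where "x1 = Inf S"
  have neS: "S \<noteq> {}" using ne S_def by simp
  have bdd: "bdd_below S" unfolding Sdef by (rule bdd_belowI[of _ l]) auto
  have lx1: "l \<le> x1" unfolding x1_def using neS by (intro cInf_greatest) (auto simp: Sdef)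
  have low: "x1 \<le> x" if "x \<in> S" for x unfolding x1_def using that bdd by (rule cInf_lower)
  obtain x0 where x0: "x0 \<in> S" using neS by auto
  have x1r: "x1 < r" using low[OF x0] x0 by (auto simp: Sdef)
  have Px1: "P x1"
  proof (cases "x1 \<in> S")
    case True then show ?thesis by (auto simp: Sdef)
  next
    case False
    show ?thesis unfolding P_def
    proof (rule ballI, rule ccontr)
      fix y assume y: "y \<in> {x1<..r}" and nle: "\<not> sl h x1 y \<le> m"
      have hc: "(h \<longlongrightarrow> h x1) (at x1 within {l..r})"
        using cont lx1 x1r unfolding continuous_on_def by auto
      have "((\<lambda>x. (h y - h x) / (y - x)) \<longlongrightarrow> (h y - h x1) / (y - x1)) (at x1 within {l..r})"
        using y by (intro tendsto_intros hc) auto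
      then have "eventually (\<lambda>x. (h y - h x) / (y - x) > m) (at x1 within {l..r})"
        using nle unfolding sl_def by (intro order_tendstoD) auto
      then obtain d where d: "d > 0" and dH: "\<And>x. x \<in> {l..r} \<Longrightarrow> x \<noteq> x1 \<Longrightarrow> dist x x1 < d \<Longrightarrow> (h y - h x) / (y - x) > m"
        unfolding eventually_at by blast
      have "x1 < x1 + min d (y - x1)" using d y by auto
      then obtain x where xS: "x \<in> S" and xl: "x < x1 + min d (y - x1)"
        using cInf_less_iff[OF neS bdd, of "x1 + min d (y - x1)"] unfolding x1_def by blast
      have "x \<noteq> x1" using xS False by auto
      with low[OF xS] have xx1: "x > x1" by auto
      have "P x" using xS by (auto simp: Sdef)
      then have "sl h x y \<le> m" using xl y unfolding P_def by auto
      moreover have "(h y - h x) / (y - x) > m"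
        using xS xx1 xl \<open>x \<noteq> x1\<close> by (intro dH) (auto simp: Sdef dist_real_def)
      ultimately show False unfolding sl_def by auto
    qed
  qed
  have x1S: "x1 \<in> S" using Px1 lx1 x1r by (auto simp: Sdef)
  have "x1 \<in> xExt h l r"
  proof (cases "x1 = l")
    case True then show ?thesis by (simp add: xExt_def)
  next
    case False
    with lx1 have lx: "l < x1" by auto
    have "\<not> (\<exists>a b. \<forall>y\<in>{x1-\<delta>..x1+\<delta>}. h y = a * y + b)" if "\<delta> > 0" for \<delta>
    proof
      assume "\<exists>a b. \<forall>y\<in>{x1-\<delta>..x1+\<delta>}. h y = a * y + b"
      then obtain a b where ab: "\<And>y. y \<in> {x1-\<delta>..x1+\<delta>} \<Longrightarrow> h y = a * y + b" by blast
      define e where "e = min \<delta> (min (x1 - l) (r - x1)) / 2"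
      have e: "e > 0" "e \<le> \<delta>" "e < x1 - l" "e < r - x1" using that lx x1r by (auto simp: e_def)
      define x0 where "x0 = x1 - e"
      have slab: "sl h u v = a" if "u \<in> {x1-\<delta>..x1+\<delta>}" "v \<in> {x1-\<delta>..x1+\<delta>}" "u < v" for u v
        using that ab[OF that(1)] ab[OF that(2)] unfolding sl_def by (simp add: field_simps)
      have am: "a \<le> m"
      proof -
        have "sl h x1 (x1 + e) \<le> m" using Px1 e unfolding P_def by auto
        moreover have "sl h x1 (x1 + e) = a" using e by (intro slab) auto
        ultimately show ?thesis by simp
      qed
      have "P x0" unfolding P_def
      proof
        fix y assume y: "y \<in> {x0<..r}"
        define z where "z = min y (x1 + e)"
        have z: "x0 < z" "z \<le> y" using y e by (auto simp: z_def x0_def)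
        have "sl h x0 z = a" using z e y by (intro slab) (auto simp: x0_def z_def)
        moreover have "sl h x0 y \<le> sl h x0 z"
        proof (cases "z = y")
          case True then show ?thesis by simp
        next
          case False
          then show ?thesis using conc_slope(1)[OF conc, of x0 z y] z y e by (auto simp: x0_def)
        qed
        ultimately show "sl h x0 y \<le> m" using am by simp
      qed
      then have "x0 \<in> S" using e x1r by (auto simp: Sdef x0_def)
      from low[OF this] e show False by (simp add: x0_def)
    qed
    then show ?thesis using lx x1r by (simp add: xExt_def)
  qed
  moreover have "rderiv h x1 \<le> ereal m" using x1S by (simp add: S_def)
  ultimately show ?thesis unfolding x1_def S_def by simp
qed

theorem mainTheorem18:
  fixes h :: "real \<Rightarrow> real" and l r m :: real
  assumes "continuous_on {l..r} h" and "concave_on {l..r} h"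
  shows "({x \<in> {l..<r}. rderiv h x \<le> ereal m} \<noteq> {} \<longrightarrow>
           (let x1 = Inf {x \<in> {l..<r}. rderiv h x \<le> ereal m}
            in x1 \<in> xExt h l r \<and> rderiv h x1 \<le> ereal m))
       \<and> ({x \<in> {l<..r}. lderiv h x \<ge> ereal m} \<noteq> {} \<longrightarrow>
           (let x2 = Sup {x \<in> {l<..r}. lderiv h x \<ge> ereal m}
            in x2 \<in> xExt h l r \<and> lderiv h x2 \<ge> ereal m))"
proof (intro conjI impI)
  assume "{x \<in> {l..<r}. rderiv h x \<le> ereal m} \<noteq> {}"
  from part1[OF assms this] show "let x1 = Inf {x \<in> {l..<r}. rderiv h x \<le> ereal m}
            in x1 \<in> xExt h l r \<and> rderiv h x1 \<le> ereal m" by simp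
next
  assume ne: "{x \<in> {l<..r}. lderiv h x \<ge> ereal m} \<noteq> {}"
  define g where "g t = h (- t)" for t
  have gc: "continuous_on {-r..-l} g" unfolding g_def
    by (rule continuous_on_compose2[OF assms(1)]) (auto intro!: continuous_intros)
  have gconc: "concave_on {-r..-l} g"
    unfolding concave_on_iff
  proof (intro conjI ballI allI impI)
    fix x y u v :: real assume xy: "x \<in> {-r..-l}" "y \<in> {-r..-l}" and uv: "0 \<le> u" "0 \<le> v" "u + v = 1"
    have "u * h (- x) + v * h (- y) \<le> h (u *\<^sub>R (-x) + v *\<^sub>R (-y))"
      using assms(2) xy uv unfolding concave_on_iff by (intro assms(2)[unfolded concave_on_iff, THEN conjunct2, rule_format]) auto
    then show "u * g x + v * g y \<le> g (u *\<^sub>R x + v *\<^sub>R y)" by (simp add: g_def)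
  qed (simp add: convex_real_interval)
  have key: "lderiv h x \<ge> ereal m \<longleftrightarrow> rderiv g (-x) \<le> ereal (-m)" if "l < x" "x \<le> r" for x
  proof -
    have A: "lderiv h x \<ge> ereal m \<longleftrightarrow> (\<forall>y\<in>{l..<x}. m \<le> sl h y x)"
      using lderiv_char[OF assms(2) that] by (simp add: le_INF_iff)
    have B: "rderiv g (-x) \<le> ereal (-m) \<longleftrightarrow> (\<forall>t\<in>{-x<..-l}. sl g (-x) t \<le> -m)"
      using rderiv_char[OF gconc, of "-x"] that by (simp add: SUP_le_iff)
    have C: "sl g (-x) t = - sl h (-t) x" for t
      unfolding sl_def g_def by (simp add: minus_diff_eq[symmetric, of "h x"] del: minus_diff_eq)
    have "(\<forall>t\<in>{-x<..-l}. sl g (-x) t \<le> -m) \<longleftrightarrow> (\<forall>t\<in>{-x<..-l}. m \<le> sl h (-t) x)"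
      using C by auto
    also have "\<dots> \<longleftrightarrow> (\<forall>y\<in>{l..<x}. m \<le> sl h y x)"
    proof
      assume H: "\<forall>t\<in>{-x<..-l}. m \<le> sl h (-t) x"
      show "\<forall>y\<in>{l..<x}. m \<le> sl h y x"
      proof
        fix y assume "y \<in> {l..<x}"
        then have "-y \<in> {-x<..-l}" by auto
        from H[rule_format, OF this] show "m \<le> sl h y x" by simp
      qed
    qed auto
    finally show ?thesis using A B by simp
  qed
  define Sg where "Sg = {t \<in> {-r..<-l}. rderiv g t \<le> ereal (-m)}"
  have eqS: "{x \<in> {l<..r}. lderiv h x \<ge> ereal m} = uminus ` Sg"
  proof (rule set_eqI)
    fix x
    show "x \<in> {x \<in> {l<..r}. lderiv h x \<ge> ereal m} \<longleftrightarrow> x \<in> uminus ` Sg"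
    proof
      assume "x \<in> {x \<in> {l<..r}. lderiv h x \<ge> ereal m}"
      then have "-x \<in> Sg" using key by (auto simp: Sg_def)
      then show "x \<in> uminus ` Sg" by (rule rev_image_eqI) simp
    next
      assume "x \<in> uminus ` Sg"
      then obtain t where "t \<in> Sg" "x = -t" by auto
      then show "x \<in> {x \<in> {l<..r}. lderiv h x \<ge> ereal m}" using key[of "-t"] by (auto simp: Sg_def)
    qed
  qed
  have neg: "Sg \<noteq> {}" using ne eqS by auto
  from part1[OF gc gconc neg[unfolded Sg_def]]
  have P: "Inf Sg \<in> xExt g (-r) (-l)" "rderiv g (Inf Sg) \<le> ereal (-m)" unfolding Sg_def by auto
  have supeq: "Sup {x \<in> {l<..r}. lderiv h x \<ge> ereal m} = - Inf Sg"
    unfolding eqS Inf_real_def by (simp add: image_image)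
  have mem: "Inf Sg \<in> {-r..<-l}"
  proof -
    obtain t where t: "t \<in> Sg" using neg by auto
    have bdd: "bdd_below Sg" by (rule bdd_belowI[of _ "-r"]) (auto simp: Sg_def)
    have "Inf Sg \<le> t" using t bdd by (rule cInf_lower)
    moreover have "-r \<le> Inf Sg" using neg by (intro cInf_greatest) (auto simp: Sg_def)
    ultimately show ?thesis using t by (auto simp: Sg_def)
  qed
  have x2ext: "- Inf Sg \<in> xExt h l r"
  proof -
    let ?t = "Inf Sg"
    show ?thesis
    proof (cases "?t = -r")
      case True then show ?thesis by (simp add: xExt_def)
    next
      case False
      with P(1) have int: "?t \<in> {-r<..<-l}" and na: "\<forall>\<delta>>0. \<not> (\<exists>a b. \<forall>y\<in>{?t-\<delta>..?t+\<delta>}. g y = a * y + b)"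
        unfolding xExt_def using mem by auto
      have "\<not> (\<exists>a b. \<forall>y\<in>{-?t-\<delta>..-?t+\<delta>}. h y = a * y + b)" if "\<delta> > 0" for \<delta>
      proof
        assume "\<exists>a b. \<forall>y\<in>{-?t-\<delta>..-?t+\<delta>}. h y = a * y + b"
        then obtain a b where ab: "\<And>y. y \<in> {-?t-\<delta>..-?t+\<delta>} \<Longrightarrow> h y = a * y + b" by blast
        have "\<forall>y\<in>{?t-\<delta>..?t+\<delta>}. g y = (-a) * y + b"
        proof
          fix y assume "y \<in> {?t-\<delta>..?t+\<delta>}"
          then have "-y \<in> {-?t-\<delta>..-?t+\<delta>}" by auto
          from ab[OF this] show "g y = (-a) * y + b" by (simp add: g_def)
        qed
        with na that show False by blast
      qed
      then show ?thesis using int by (auto simp: xExt_def)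
    qed
  qed
  have "lderiv h (- Inf Sg) \<ge> ereal m" using key[of "- Inf Sg"] mem P(2) by auto
  then show "let x2 = Sup {x \<in> {l<..r}. lderiv h x \<ge> ereal m}
            in x2 \<in> xExt h l r \<and> lderiv h x2 \<ge> ereal m" using x2ext supeq by simp
qed

end
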